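(* Let $f \in C^1(\mathcal{T})$ and $g \in C^1([0,1])$, where $\mathcal{T}=\{(x,y)\in\mathbb{R}^2: 0\le y\le x\le 1\}$. Let $k\in C^1(\mathcal{T})$ be the solution of the Goursat problem $$k_y(x,y)+k_x(x,y)=f(x,y)-\int_y^x f(x,\eta)k(\eta,y)\,d\eta \ \ \forall (x,y)\in\mathcal{T},\qquad k(1,y)=0\ \ \forall y\in[0,1].$$ Let $l\in C^1(\mathcal{T})$ be the inverse kernel, i.e., the kernel for which the inverse of the map $w\mapsto w(x)-\int_0^x k(x,y)w(y)\,dy$ is $u\mapsto u(x)+\int_0^x l(x,y)u(y)\,dy$. Define $p_1(x)=g(x)-k(x,0)$ and $$\theta(x)=p_1(x)+\int_0^x l(x,y)p_1(y)\,dy,\qquad x\in[0,1].$$ Consider the plant $$u_t(x,t)=u_x(x,t)+g(x)u(0,t)+\int_0^x f(x,y)u(y,t)\,dy,\qquad u(1,t)=U(t),\qquad Y(t)=u(0,t),$$ with $u(\cdot,0)=u_0$, and the observer $$\hat u_t(x,t)=\hat u_x(x,t)+g(x)\hat u(0,t)+\int_0^x f(x,y)\hat u(y,t)\,dy+p_1(x)\,[u(0,t)-\hat u(0,t)],\qquad \hat u(1,t)=U(t),$$ with $\hat u(\cdot,0)=\hat u_0$. Let $U\in C^1(\mathbb{R}^+)$ and $u_0,\hat u_0\in C^1([0,1])$ satisfy $$u_0(1)=U(0),\qquad \dot U(0)=u_0'(1)+g(1)u_0(0)+\int_0^1 f(1,y)u_0(y)\,dy,$$ $$\hat u_0(1)=U(0),\qquad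 \dot U(0)=\hat u_0'(1)+g(1)\hat u_0(0)+\int_0^1 f(1,y)\hat u_0(y)\,dy+p_1(1)\,[u_0(0)-\hat u_0(0)].$$ Then the solution satisfies, for all $t\ge 1$ and all $x\in[0,1]$, $$\hat u(x,t)=\hat w(x,t)-\int_0^x k(x,y)\hat w(y,t)\,dy,$$ where $$\hat w(x,t)=\int_{t+x-1}^{t}\theta(t+x-\tau)\,Y(\tau)\,d\tau+U(t+x-1),\qquad x\in[0,1].$$
   Context: $\mathbb{R}^+=[0,\infty)$. The Goursat problem for $k$ has a unique $C^1(\mathcal{T})$ solution; the inverse kernel $l$ exists in $C^1(\mathcal{T})$. Under the stated compatibility conditions the plant and observer systems have unique classical solutions defined for all $t\ge 0$. *)

theory Defs
  imports "HOL-Analysis.Analysis"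
begin

definition Tri :: "(real \<times> real) set" where
  "Tri = {(x, y). 0 \<le> y \<and> y \<le> x \<and> x \<le> 1}"

definition Dom :: "(real \<times> real) set" where
  "Dom = {0..1} \<times> {0..}"

definition C1_partials_on ::
  "(real \<times> real) set \<Rightarrow> (real \<Rightarrow> real \<Rightarrow> real) \<Rightarrow> (real \<Rightarrow> real \<Rightarrow> real)
     \<Rightarrow> (real \<Rightarrow> real \<Rightarrow> real) \<Rightarrow> bool" where
  "C1_partials_on S F F1 F2 \<longleftrightarrow>
     continuous_on S (case_prod F1) \<and> continuous_on S (case_prod F2) \<and>
     (\<forall>z\<in>S. (case_prod F has_derivative (\<lambda>h. F1 (fst z) (snd z) * fst h + F2 (fst z) (snd z) * snd h))
                (at z within S))"

definition C1_on2 :: "(real \<times> real) set \<Rightarrow> (real \<Rightarrow> real \<Rightarrow> real) \<Rightarrow> bool" where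
  "C1_on2 S F \<longleftrightarrow> (\<exists>F1 F2. C1_partials_on S F F1 F2)"

definition C1_deriv_on :: "real set \<Rightarrow> (real \<Rightarrow> real) \<Rightarrow> (real \<Rightarrow> real) \<Rightarrow> bool" where
  "C1_deriv_on S F F' \<longleftrightarrow> continuous_on S F' \<and>
     (\<forall>x\<in>S. (F has_real_derivative F' x) (at x within S))"

end

theory Submission
  imports Defs
begin

lemma deriv_within_Un:
  fixes f :: "real \<Rightarrow> real"
  assumes "(f has_field_derivative D) (at x within S)"
    and "(f has_field_derivative D) (at x within T)"
  shows "(f has_field_derivative D) (at x within (S \<union> T))"
  using assms by (simp add: has_field_derivative_iff Lim_within_Un)

lemma integral_scale01:
  fixes g :: "real \<Rightarrow> real"
  assumes "b \<le> a" "continuous_on {b..a} g"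
  shows "integral {b..a} g = (a - b) * integral {0..1} (\<lambda>r. g (b + (a - b) * r))"
proof -
  have "((\<lambda>r. (a - b) *\<^sub>R g (b + (a - b) * r)) has_integral integral {b + (a - b) * 0..b + (a - b) * 1} g) {0..1}"
  proof (rule has_integral_substitution[where c=b and d=a])
    show "(\<lambda>r. b + (a - b) * r) ` {0..1} \<subseteq> {b..a}"
    proof
      fix y assume "y \<in> (\<lambda>r. b + (a - b) * r) ` {0..1}"
      then obtain r where r: "r \<in> {0..1}" "y = b + (a - b) * r" by auto
      have "0 \<le> (a - b) * r" using r assms by auto
      moreover have "(a - b) * r \<le> (a - b) * 1" using r assms by (intro mult_left_mono) auto
      ultimately show "y \<in> {b..a}" using r by auto
    qed
    show "((\<lambda>r. b + (a - b) * r) has_real_derivative (a - b)) (at x within {0..1})" for x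
      by (auto intro!: derivative_eq_intros)
  qed (use assms in auto)
  then have "integral {0..1} (\<lambda>r. (a - b) * g (b + (a - b) * r)) = integral {b..a} g"
    by (intro integral_unique) simp
  then show ?thesis by simp
qed

lemma param_integral_continuous:
  fixes lo hi :: "'p::topological_space \<Rightarrow> real" and \<phi> :: "'p \<Rightarrow> real \<Rightarrow> real"
  assumes "continuous_on P lo" "continuous_on P hi" "\<And>p. p \<in> P \<Longrightarrow> lo p \<le> hi p"
    and "continuous_on {(p, z). p \<in> P \<and> lo p \<le> z \<and> z \<le> hi p} (\<lambda>(p, z). \<phi> p z)"
  shows "continuous_on P (\<lambda>p. integral {lo p..hi p} (\<phi> p))"
proof -
  have eq: "integral {lo p..hi p} (\<phi> p) = (hi p - lo p) * integral (cbox 0 1) (\<lambda>r. \<phi> p (lo p + (hi p - lo p) * r))"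
    if "p \<in> P" for p
  proof -
    have "continuous_on {lo p..hi p} (\<lambda>z. (\<lambda>(p, z). \<phi> p z) (p, z))"
      by (rule continuous_on_compose2[OF assms(4)])
         (use that in \<open>auto intro!: continuous_intros\<close>)
    then have "continuous_on {lo p..hi p} (\<phi> p)" by simp
    then show ?thesis using integral_scale01[of "lo p" "hi p" "\<phi> p"] assms(3)[OF that] by simp
  qed
  have c: "continuous_on (P \<times> cbox 0 1) (\<lambda>(p, r). \<phi> p (lo p + (hi p - lo p) * r))"
  proof -
    have "continuous_on (P \<times> cbox 0 1) (\<lambda>x. (fst x, lo (fst x) + (hi (fst x) - lo (fst x)) * snd x))"
      by (intro continuous_intros continuous_on_compose2[OF assms(1)] continuous_on_compose2[OF assms(2)]) auto
    moreover have "(\<lambda>x. (fst x, lo (fst x) + (hi (fst x) - lo (fst x)) * snd x)) ` (P \<times> cbox 0 1)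
       \<subseteq> {(p, z). p \<in> P \<and> lo p \<le> z \<and> z \<le> hi p}"
    proof (rule image_subsetI)
      fix x assume "x \<in> P \<times> cbox (0::real) 1"
      then obtain p r where x: "x = (p, r)" "p \<in> P" "0 \<le> r" "r \<le> 1" by (auto simp: cbox_interval)
      have "lo p \<le> hi p" using assms(3) x by auto
      moreover have "(hi p - lo p) * r \<le> (hi p - lo p) * 1" using x \<open>lo p \<le> hi p\<close> by (intro mult_left_mono) auto
      moreover have "0 \<le> (hi p - lo p) * r" using x \<open>lo p \<le> hi p\<close> by auto
      ultimately show "(fst x, lo (fst x) + (hi (fst x) - lo (fst x)) * snd x) \<in> {(p, z). p \<in> P \<and> lo p \<le> z \<and> z \<le> hi p}"
        using x by auto
    qed
    ultimately have "continuous_on (P \<times> cbox 0 1) (\<lambda>x. (\<lambda>(p, z). \<phi> p z) (fst x, lo (fst x) + (hi (fst x) - lo (fst x)) * snd x))"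
      by (rule continuous_on_compose2[OF assms(4)])
    then show ?thesis by (simp add: case_prod_beta)
  qed
  have "continuous_on P (\<lambda>p. (hi p - lo p) * integral (cbox 0 1) (\<lambda>r. \<phi> p (lo p + (hi p - lo p) * r)))"
    by (intro continuous_intros assms integral_continuous_on_param[OF c])
  then show ?thesis using eq by (simp add: continuous_on_eq)
qed


lemma deriv_trivial_within:
  fixes f :: "real \<Rightarrow> real"
  assumes "x \<notin> closure S"
  shows "(f has_field_derivative D) (at x within S)"
proof -
  have "at x within S = bot" using not_in_closure_trivial_limitI[OF assms] by (simp add: trivial_limit_def)
  then show ?thesis by simp
qed

lemma var_leibniz:
  fixes H Ha :: "real \<Rightarrow> real \<Rightarrow> real"
  assumes cH: "continuous_on {(a, z). 0 \<le> z \<and> z \<le> a \<and> a \<le> X} (\<lambda>(a, z). H a z)"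
    and cHa: "continuous_on {(a, z). 0 \<le> z \<and> z \<le> a \<and> a \<le> X} (\<lambda>(a, z). Ha a z)"
    and dH: "\<And>a z. 0 \<le> z \<Longrightarrow> z \<le> a \<Longrightarrow> a \<le> X \<Longrightarrow>
               ((\<lambda>a. H a z) has_real_derivative Ha a z) (at a within {z..X})"
    and a0: "0 \<le> a0" "a0 \<le> X"
  shows "((\<lambda>a. integral {0..a} (H a)) has_real_derivative (H a0 a0 + integral {0..a0} (Ha a0)))
           (at a0 within {0..X})"
proof -
  define T where "T = {(a, z). 0 \<le> z \<and> z \<le> a \<and> a \<le> (X::real)}"
  define S where "S = {0..X} \<times> {0..(X::real)}"
  define E where "E a z = (if z \<le> a then H a z else H z z + (a - z) * Ha z z)" for a z
  define Ea where "Ea a z = (if z \<le> a then Ha a z else Ha z z)" for a z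
  have cH': "continuous_on T (\<lambda>p. H (fst p) (snd p))" using cH by (simp add: T_def case_prod_beta)
  have cHa': "continuous_on T (\<lambda>p. Ha (fst p) (snd p))" using cHa by (simp add: T_def case_prod_beta)
  have diag: "continuous_on S (\<lambda>p. G (snd p) (snd p))" if cG: "continuous_on T (\<lambda>p. G (fst p) (snd p))" for G
  proof -
    have "continuous_on S (\<lambda>p. (\<lambda>q. G (fst q) (snd q)) (snd p, snd p))"
      by (rule continuous_on_compose2[OF cG]) (auto simp: S_def T_def intro!: continuous_intros)
    then show ?thesis by simp
  qed
  have cE: "continuous_on S (\<lambda>p. E (fst p) (snd p))"
  proof -
    have "continuous_on S (\<lambda>p. if snd p - fst p \<le> 0 then H (fst p) (snd p)
            else H (snd p) (snd p) + (fst p - snd p) * Ha (snd p) (snd p))"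
    proof (rule continuous_on_cases_le)
      show "continuous_on {p \<in> S. snd p - fst p \<le> 0} (\<lambda>p. H (fst p) (snd p))"
        by (rule continuous_on_subset[OF cH']) (auto simp: S_def T_def)
      show "continuous_on {p \<in> S. 0 \<le> snd p - fst p} (\<lambda>p. H (snd p) (snd p) + (fst p - snd p) * Ha (snd p) (snd p))"
        by (intro continuous_intros continuous_on_subset[OF diag[OF cH']] continuous_on_subset[OF diag[OF cHa']]) auto
    qed (auto intro!: continuous_intros)
    then show ?thesis by (rule continuous_on_eq) (auto simp: E_def)
  qed
  have cEa: "continuous_on S (\<lambda>p. Ea (fst p) (snd p))"
  proof -
    have "continuous_on S (\<lambda>p. if snd p - fst p \<le> 0 then Ha (fst p) (snd p) else Ha (snd p) (snd p))"
    proof (rule continuous_on_cases_le)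
      show "continuous_on {p \<in> S. snd p - fst p \<le> 0} (\<lambda>p. Ha (fst p) (snd p))"
        by (rule continuous_on_subset[OF cHa']) (auto simp: S_def T_def)
      show "continuous_on {p \<in> S. 0 \<le> snd p - fst p} (\<lambda>p. Ha (snd p) (snd p))"
        by (intro continuous_on_subset[OF diag[OF cHa']]) auto
    qed (auto intro!: continuous_intros)
    then show ?thesis by (rule continuous_on_eq) (auto simp: Ea_def)
  qed
  have dE: "((\<lambda>a. E a z) has_real_derivative Ea a z) (at a within {0..X})"
    if z: "0 \<le> z" "z \<le> X" and a: "0 \<le> a" "a \<le> X" for a z
  proof -
    have "{0..X} = {0..z} \<union> {z..X}" using z by auto
    moreover have "((\<lambda>a. E a z) has_real_derivative Ea a z) (at a within {0..z})"
    proof (cases "a \<le> z")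
      case True
      have "((\<lambda>a. H z z + (a - z) * Ha z z) has_real_derivative Ha z z) (at a within {0..z})"
        by (auto intro!: derivative_eq_intros)
      then have "((\<lambda>a. E a z) has_real_derivative Ha z z) (at a within {0..z})"
        by (rule has_field_derivative_transform_within[where d=1])
           (use True a in \<open>auto simp: E_def Ea_def\<close>)
      moreover have "Ea a z = Ha z z" using True by (auto simp: Ea_def)
      ultimately show ?thesis by simp
    next
      case False then show ?thesis by (intro deriv_trivial_within) auto
    qed
    moreover have "((\<lambda>a. E a z) has_real_derivative Ea a z) (at a within {z..X})"
    proof (cases "z \<le> a")
      case True
      have "((\<lambda>a. H a z) has_real_derivative Ha a z) (at a within {z..X})"
        using dH[of z a] True z a by auto
      then have "((\<lambda>a. E a z) has_real_derivative Ha a z) (at a within {z..X})"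
        by (rule has_field_derivative_transform_within[where d=1])
           (use True a in \<open>auto simp: E_def Ea_def\<close>)
      moreover have "Ea a z = Ha a z" using True by (auto simp: Ea_def)
      ultimately show ?thesis by simp
    next
      case False then show ?thesis by (intro deriv_trivial_within) auto
    qed
    ultimately show ?thesis by (metis deriv_within_Un)
  qed
  define \<Gamma> where "\<Gamma> a b = integral {0..b} (E a)" for a b
  have cE_line: "continuous_on {0..b} (E a)" if "a \<in> {0..X}" "b \<in> {0..X}" for a b
  proof -
    have "continuous_on {0..b} (\<lambda>z. (\<lambda>p. E (fst p) (snd p)) (a, z))"
      by (rule continuous_on_compose2[OF cE]) (use that in \<open>auto simp: S_def intro!: continuous_intros\<close>)
    then show ?thesis by simp
  qed
  have dG: "((\<lambda>(a, b). \<Gamma> a b) has_derivative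
      (\<lambda>(ta, tb). integral {0..a0} (Ea a0) * ta + blinfun_mult_right (E a0 a0) tb)) (at (a0, a0) within {0..X} \<times> {0..X})"
  proof (rule has_derivative_partialsI[where fy="\<lambda>a b. blinfun_mult_right (E a b)"])
    have "((\<lambda>a. integral (cbox 0 a0) (E a)) has_field_derivative integral (cbox 0 a0) (Ea a0)) (at a0 within {0..X})"
    proof (rule leibniz_rule_field_derivative)
      show "((\<lambda>a. E a t) has_field_derivative Ea a t) (at a within {0..X})" if "a \<in> {0..X}" "t \<in> cbox 0 a0" for a t
        using that a0 by (intro dE) auto
      show "E a integrable_on cbox 0 a0" if "a \<in> {0..X}" for a
        using cE_line[of a a0] that a0 by (auto intro: integrable_continuous_real)
      show "continuous_on ({0..X} \<times> cbox 0 a0) (\<lambda>(a, t). Ea a t)"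
        by (rule continuous_on_subset[OF cEa[unfolded case_prod_beta[symmetric]]]) (use a0 in \<open>auto simp: S_def\<close>)
    qed (use a0 in auto)
    then show "((\<lambda>a. \<Gamma> a a0) has_derivative (\<lambda>ta. integral {0..a0} (Ea a0) * ta)) (at a0 within {0..X})"
      by (simp add: \<Gamma>_def has_field_derivative_def)
    show "((\<lambda>b. \<Gamma> a b) has_derivative blinfun_apply (blinfun_mult_right (E a b))) (at b within {0..X})"
      if "a \<in> {0..X}" "b \<in> {0..X}" for a b
    proof -
      have "((\<lambda>b. integral {0..b} (E a)) has_real_derivative E a b) (at b within {0..X})"
        by (rule integral_has_real_derivative) (use that in \<open>auto intro: cE_line\<close>)
      then show ?thesis by (simp add: \<Gamma>_def has_field_derivative_def)
    qed
    have "continuous_on ({0..X} \<times> {0..X}) (\<lambda>p. blinfun_mult_right (E (fst p) (snd p)))"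
      by (intro continuous_intros) (use cE in \<open>simp add: S_def\<close>)
    then show "continuous (at (a0, a0) within {0..X} \<times> {0..X}) (\<lambda>(a, b). blinfun_mult_right (E a b))"
      using a0 by (auto simp: continuous_on_eq_continuous_within case_prod_beta split_def)
  qed (use a0 in auto)
  have "(((\<lambda>(a, b). \<Gamma> a b) \<circ> (\<lambda>a. (a, a))) has_derivative
      ((\<lambda>(ta, tb). integral {0..a0} (Ea a0) * ta + blinfun_mult_right (E a0 a0) tb) \<circ> (\<lambda>h. (h, h)))) (at a0 within {0..X})"
  proof (rule diff_chain_within)
    show "((\<lambda>a. (a, a)) has_derivative (\<lambda>h. (h, h))) (at a0 within {0..X})"
      by (auto intro!: derivative_eq_intros)
    show "((\<lambda>(a, b). \<Gamma> a b) has_derivative (\<lambda>(ta, tb). integral {0..a0} (Ea a0) * ta + blinfun_mult_right (E a0 a0) tb))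
        (at (a0, a0) within (\<lambda>a. (a, a)) ` {0..X})"
      by (rule has_derivative_subset[OF dG]) auto
  qed
  then have "((\<lambda>x. \<Gamma> x x) has_derivative (\<lambda>x. x * E a0 a0 + x * integral {0..a0} (Ea a0))) (at a0 within {0..X})"
    by (simp add: o_def algebra_simps)
  then have "((\<lambda>a. \<Gamma> a a) has_real_derivative (E a0 a0 + integral {0..a0} (Ea a0))) (at a0 within {0..X})"
    unfolding has_field_derivative_def by (rule has_derivative_eq_rhs) (auto simp: fun_eq_iff algebra_simps)
  moreover have "E a0 a0 = H a0 a0" by (simp add: E_def)
  moreover have "integral {0..a0} (Ea a0) = integral {0..a0} (Ha a0)"
    by (rule integral_cong) (auto simp: Ea_def)
  ultimately have "((\<lambda>a. \<Gamma> a a) has_real_derivative (H a0 a0 + integral {0..a0} (Ha a0))) (at a0 within {0..X})"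
    by simp
  then show ?thesis
  proof (rule has_field_derivative_transform_within[where d=1])
    show "\<Gamma> a a = integral {0..a} (H a)" if "a \<in> {0..X}" for a
      unfolding \<Gamma>_def by (rule integral_cong) (auto simp: E_def)
  qed (use a0 in auto)
qed


lemma ftc_real:
  fixes f f' :: "real \<Rightarrow> real"
  assumes "a \<le> b" "\<And>x. x \<in> {a..b} \<Longrightarrow> (f has_real_derivative f' x) (at x within {a..b})"
  shows "integral {a..b} f' = f b - f a"
  using fundamental_theorem_of_calculus[of a b f f'] assms
  by (simp add: has_real_derivative_iff_has_vector_derivative integral_unique)

lemma C1_line_deriv:
  assumes C: "C1_partials_on S F F1 F2" and A: "\<And>s. s \<in> A \<Longrightarrow> (p + \<alpha> * s, q + \<beta> * s) \<in> S" and s: "s \<in> A"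
  shows "((\<lambda>s. F (p + \<alpha> * s) (q + \<beta> * s)) has_real_derivative
           (\<alpha> * F1 (p + \<alpha> * s) (q + \<beta> * s) + \<beta> * F2 (p + \<alpha> * s) (q + \<beta> * s))) (at s within A)"
proof -
  let ?g = "\<lambda>s. (p + \<alpha> * s, q + \<beta> * s)"
  have dF: "(case_prod F has_derivative (\<lambda>h. F1 (p + \<alpha> * s) (q + \<beta> * s) * fst h + F2 (p + \<alpha> * s) (q + \<beta> * s) * snd h))
      (at (?g s) within S)"
    using C A[OF s] unfolding C1_partials_on_def by force
  have "((case_prod F \<circ> ?g) has_derivative
      ((\<lambda>h. F1 (p + \<alpha> * s) (q + \<beta> * s) * fst h + F2 (p + \<alpha> * s) (q + \<beta> * s) * snd h) \<circ> (\<lambda>h. (\<alpha> * h, \<beta> * h)))) (at s within A)"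
  proof (rule diff_chain_within)
    show "(?g has_derivative (\<lambda>h. (\<alpha> * h, \<beta> * h))) (at s within A)"
      by (auto intro!: derivative_eq_intros)
    show "(case_prod F has_derivative (\<lambda>h. F1 (p + \<alpha> * s) (q + \<beta> * s) * fst h + F2 (p + \<alpha> * s) (q + \<beta> * s) * snd h))
      (at (?g s) within ?g ` A)"
      by (rule has_derivative_subset[OF dF]) (use A in auto)
  qed
  then have "((\<lambda>s. F (p + \<alpha> * s) (q + \<beta> * s)) has_derivative
      (\<lambda>h. F1 (p + \<alpha> * s) (q + \<beta> * s) * (\<alpha> * h) + F2 (p + \<alpha> * s) (q + \<beta> * s) * (\<beta> * h))) (at s within A)"
    by (simp add: o_def)
  then show ?thesis
    unfolding has_field_derivative_def by (rule has_derivative_eq_rhs) (auto simp: fun_eq_iff algebra_simps)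
qed

lemma C1_d1:
  assumes "C1_partials_on S F F1 F2" "\<And>x'. x' \<in> A \<Longrightarrow> (x', y) \<in> S" "x \<in> A"
  shows "((\<lambda>x. F x y) has_real_derivative F1 x y) (at x within A)"
  using C1_line_deriv[of S F F1 F2 A 0 1 y 0 x] assms by simp

lemma C1_d2:
  assumes "C1_partials_on S F F1 F2" "\<And>y'. y' \<in> A \<Longrightarrow> (x, y') \<in> S" "y \<in> A"
  shows "((\<lambda>y. F x y) has_real_derivative F2 x y) (at y within A)"
  using C1_line_deriv[of S F F1 F2 A x 0 0 1 y] assms by simp

lemma C1_cont:
  assumes "C1_partials_on S F F1 F2"
  shows "continuous_on S (\<lambda>(x, y). F x y)"
  using assms unfolding C1_partials_on_def
  by (intro has_derivative_continuous_on) (auto simp: case_prod_beta)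

lemma tri_fubini:
  fixes \<psi> :: "real \<Rightarrow> real \<Rightarrow> real"
  assumes c\<psi>: "continuous_on {(a, y). 0 \<le> y \<and> y \<le> a \<and> a \<le> X} (\<lambda>(a, y). \<psi> a y)" and X: "0 \<le> X"
  shows "integral {0..X} (\<lambda>y. integral {y..X} (\<lambda>\<eta>. \<psi> \<eta> y)) = integral {0..X} (\<lambda>\<eta>. integral {0..\<eta>} (\<psi> \<eta>))"
proof -
  define T where "T = {(a, y). 0 \<le> y \<and> y \<le> a \<and> a \<le> (X::real)}"
  define H where "H a y = integral {y..a} (\<lambda>\<eta>. \<psi> \<eta> y)" for a y
  have c\<psi>': "continuous_on T (\<lambda>p. \<psi> (fst p) (snd p))" using c\<psi> by (simp add: T_def case_prod_beta)
  have cH: "continuous_on T (\<lambda>(a, y). H a y)"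
  proof -
    have "continuous_on T (\<lambda>p. integral {snd p..fst p} (\<lambda>\<eta>. \<psi> \<eta> (snd p)))"
    proof (rule param_integral_continuous)
      have "continuous_on {(p, z). p \<in> T \<and> snd p \<le> z \<and> z \<le> fst p} (\<lambda>q. (\<lambda>p. \<psi> (fst p) (snd p)) (snd q, snd (fst q)))"
        by (rule continuous_on_compose2[OF c\<psi>']) (auto simp: T_def intro!: continuous_intros)
      then show "continuous_on {(p, z). p \<in> T \<and> snd p \<le> z \<and> z \<le> fst p} (\<lambda>(p, z). \<psi> z (snd p))"
        by (simp add: case_prod_beta)
    qed (auto simp: T_def intro!: continuous_intros)
    then show ?thesis by (simp add: H_def case_prod_beta)
  qed
  have line: "continuous_on {y..X} (\<lambda>\<eta>. \<psi> \<eta> y)" if "0 \<le> y" for y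
  proof -
    have "continuous_on {y..X} (\<lambda>\<eta>. (\<lambda>p. \<psi> (fst p) (snd p)) (\<eta>, y))"
      by (rule continuous_on_compose2[OF c\<psi>']) (use that in \<open>auto simp: T_def intro!: continuous_intros\<close>)
    then show ?thesis by simp
  qed
  have cQ: "continuous_on {0..X} (\<lambda>\<eta>. integral {0..\<eta>} (\<psi> \<eta>))"
  proof (rule param_integral_continuous)
    have "continuous_on {(p, z). p \<in> {0..X} \<and> 0 \<le> z \<and> z \<le> p} (\<lambda>q. (\<lambda>p. \<psi> (fst p) (snd p)) (fst q, snd q))"
      by (rule continuous_on_compose2[OF c\<psi>']) (auto simp: T_def intro!: continuous_intros)
    then show "continuous_on {(p, z). p \<in> {0..X} \<and> 0 \<le> z \<and> z \<le> p} (\<lambda>(p, z). \<psi> p z)"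
      by (simp add: case_prod_beta)
  qed (auto intro!: continuous_intros)
  have dP: "((\<lambda>a. integral {0..a} (H a)) has_real_derivative integral {0..a} (\<psi> a)) (at a within {0..X})"
    if "a \<in> {0..X}" for a
  proof -
    have "((\<lambda>a. integral {0..a} (H a)) has_real_derivative (H a a + integral {0..a} (\<psi> a))) (at a within {0..X})"
    proof (rule var_leibniz)
      show "continuous_on {(a, z). 0 \<le> z \<and> z \<le> a \<and> a \<le> X} (\<lambda>(a, z). H a z)" using cH by (simp add: T_def)
      show "((\<lambda>a. H a z) has_real_derivative \<psi> a z) (at a within {z..X})"
        if "0 \<le> z" "z \<le> a" "a \<le> X" for a z
        unfolding H_def by (rule integral_has_real_derivative) (use that line in auto)
    qed (use c\<psi> that in auto)
    then show ?thesis by (simp add: H_def)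
  qed
  have dQ: "((\<lambda>a. integral {0..a} (\<lambda>\<eta>. integral {0..\<eta>} (\<psi> \<eta>))) has_real_derivative integral {0..a} (\<psi> a)) (at a within {0..X})"
    if "a \<in> {0..X}" for a
    by (rule integral_has_real_derivative[OF cQ that])
  have "integral {0..X} (\<lambda>a. integral {0..a} (\<psi> a)) = integral {0..X} (H X) - integral {0..0} (H 0)"
    by (rule ftc_real[OF X]) (use dP in auto)
  moreover have "integral {0..X} (\<lambda>a. integral {0..a} (\<psi> a)) =
      integral {0..X} (\<lambda>\<eta>. integral {0..\<eta>} (\<psi> \<eta>)) - integral {0..0} (\<lambda>\<eta>. integral {0..\<eta>} (\<psi> \<eta>))"
    by (rule ftc_real[OF X]) (use dQ in auto)
  moreover have "H X = (\<lambda>y. integral {y..X} (\<lambda>\<eta>. \<psi> \<eta> y))" by (simp add: H_def fun_eq_iff)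
  ultimately show ?thesis by simp
qed


lemma cont_comp2:
  assumes "continuous_on S (\<lambda>(x, y). F x y)" "continuous_on A a" "continuous_on A b"
    "\<And>p. p \<in> A \<Longrightarrow> (a p, b p) \<in> S"
  shows "continuous_on A (\<lambda>p. F (a p) (b p))"
proof -
  have "continuous_on A (\<lambda>p. (\<lambda>(x, y). F x y) (a p, b p))"
    by (rule continuous_on_compose2[OF assms(1)]) (use assms in \<open>auto intro!: continuous_intros\<close>)
  then show ?thesis by simp
qed

lemma deriv_unique_Icc:
  fixes f :: "real \<Rightarrow> real"
  assumes "a < b" "x \<in> {a..b}" "(f has_real_derivative D1) (at x within {a..b})"
    "(f has_real_derivative D2) (at x within {a..b})"
  shows "D1 = D2"
  using vector_derivative_unique_within_closed_interval[of a b x f D1 D2] assms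
  by (simp add: has_real_derivative_iff_has_vector_derivative)

lemma integrable_cont: "continuous_on {a..b} (f :: real \<Rightarrow> real) \<Longrightarrow> f integrable_on {a..b}"
  by (rule integrable_continuous_real)


theorem theorem3:
  fixes f k kx ky l :: "real \<Rightarrow> real \<Rightarrow> real"
    and g U U' u0 u0' uh0 uh0' :: "real \<Rightarrow> real"
    and u ux ut uh uhx uht :: "real \<Rightarrow> real \<Rightarrow> real"
  assumes f_C1: "C1_on2 Tri f"
    and g_C1: "\<exists>g'. C1_deriv_on {0..1} g g'"
    and k_C1: "C1_partials_on Tri k kx ky"
    and k_pde: "\<forall>x y. (x, y) \<in> Tri \<longrightarrow>
          ky x y + kx x y = f x y - integral {y..x} (\<lambda>\<eta>. f x \<eta> * k \<eta> y)"
    and k_bc: "\<forall>y\<in>{0..1}. k 1 y = 0"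
    and l_C1: "C1_on2 Tri l"
    and l_inv1: "\<forall>w. continuous_on {0..1} w \<longrightarrow>
          (\<forall>x\<in>{0..1}. (\<lambda>s. w s - integral {0..s} (\<lambda>y. k s y * w y)) x
             + integral {0..x} (\<lambda>y. l x y * (w y - integral {0..y} (\<lambda>z. k y z * w z))) = w x)"
    and l_inv2: "\<forall>v. continuous_on {0..1} v \<longrightarrow>
          (\<forall>x\<in>{0..1}. (v x + integral {0..x} (\<lambda>y. l x y * v y))
             - integral {0..x} (\<lambda>y. k x y * (v y + integral {0..y} (\<lambda>z. l y z * v z))) = v x)"
    and U_C1: "C1_deriv_on {0..} U U'"
    and u0_C1: "C1_deriv_on {0..1} u0 u0'"
    and uh0_C1: "C1_deriv_on {0..1} uh0 uh0'"
    and compat1: "u0 1 = U 0"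
    and compat2: "U' 0 = u0' 1 + g 1 * u0 0 + integral {0..1} (\<lambda>y. f 1 y * u0 y)"
    and compat3: "uh0 1 = U 0"
    and compat4: "U' 0 = uh0' 1 + g 1 * uh0 0 + integral {0..1} (\<lambda>y. f 1 y * uh0 y)
                          + (g 1 - k 1 0) * (u0 0 - uh0 0)"
    and u_C1: "C1_partials_on Dom u ux ut"
    and u_pde: "\<forall>x t. x \<in> {0..1} \<and> 0 \<le> t \<longrightarrow>
          ut x t = ux x t + g x * u 0 t + integral {0..x} (\<lambda>y. f x y * u y t)"
    and u_bc: "\<forall>t\<ge>0. u 1 t = U t"
    and u_ic: "\<forall>x\<in>{0..1}. u x 0 = u0 x"
    and uh_C1: "C1_partials_on Dom uh uhx uht"
    and uh_pde: "\<forall>x t. x \<in> {0..1} \<and> 0 \<le> t \<longrightarrow>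
          uht x t = uhx x t + g x * uh 0 t + integral {0..x} (\<lambda>y. f x y * uh y t)
                    + (g x - k x 0) * (u 0 t - uh 0 t)"
    and uh_bc: "\<forall>t\<ge>0. uh 1 t = U t"
    and uh_ic: "\<forall>x\<in>{0..1}. uh x 0 = uh0 x"
  shows "let p1 = (\<lambda>x. g x - k x 0);
             \<theta> = (\<lambda>x. p1 x + integral {0..x} (\<lambda>y. l x y * p1 y));
             Y = (\<lambda>\<tau>. u 0 \<tau>);
             wh = (\<lambda>x t. integral {t + x - 1..t} (\<lambda>\<tau>. \<theta> (t + x - \<tau>) * Y \<tau>) + U (t + x - 1))
         in \<forall>t\<ge>1. \<forall>x\<in>{0..1}. uh x t = wh x t - integral {0..x} (\<lambda>y. k x y * wh y t)"
proof -
  obtain f1 f2 where fC: "C1_partials_on Tri f f1 f2" using f_C1 by (auto simp: C1_on2_def)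
  obtain l1 l2 where lC: "C1_partials_on Tri l l1 l2" using l_C1 by (auto simp: C1_on2_def)
  have cf: "continuous_on Tri (\<lambda>(x, y). f x y)" by (rule C1_cont[OF fC])
  have cl: "continuous_on Tri (\<lambda>(x, y). l x y)" by (rule C1_cont[OF lC])
  have cl1: "continuous_on Tri (\<lambda>(x, y). l1 x y)" using lC by (simp add: C1_partials_on_def)
  have ck: "continuous_on Tri (\<lambda>(x, y). k x y)" by (rule C1_cont[OF k_C1])
  have ckx: "continuous_on Tri (\<lambda>(x, y). kx x y)" using k_C1 by (simp add: C1_partials_on_def)
  have cky: "continuous_on Tri (\<lambda>(x, y). ky x y)" using k_C1 by (simp add: C1_partials_on_def)
  have cuh: "continuous_on Dom (\<lambda>(x, y). uh x y)" by (rule C1_cont[OF uh_C1])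
  have cuhx: "continuous_on Dom (\<lambda>(x, y). uhx x y)" using uh_C1 by (simp add: C1_partials_on_def)
  have cuht: "continuous_on Dom (\<lambda>(x, y). uht x y)" using uh_C1 by (simp add: C1_partials_on_def)
  have Tri_iff: "(x, y) \<in> Tri \<longleftrightarrow> 0 \<le> y \<and> y \<le> x \<and> x \<le> 1" for x y by (simp add: Tri_def)
  have Dom_iff: "(x, t) \<in> Dom \<longleftrightarrow> 0 \<le> x \<and> x \<le> 1 \<and> 0 \<le> t" for x t by (auto simp: Dom_def)

  define W where "W x t = uh x t + integral {0..x} (\<lambda>y. l x y * uh y t)" for x t
  define Wx where "Wx x t = uhx x t + l x x * uh x t + integral {0..x} (\<lambda>y. l1 x y * uh y t)" for x t
  define Wt where "Wt x t = uht x t + integral {0..x} (\<lambda>y. l x y * uht y t)" for x t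
  define R where "R x t = Wt x t - Wx x t" for x t
  define V where "V x t = integral {0..x} (\<lambda>y. k x y * W y t)" for x t

  have jointI: "continuous_on Dom (\<lambda>(x, t). integral {0..x} (\<lambda>y. F x y * G y t))"
    if cF: "continuous_on Tri (\<lambda>(x, y). F x y)" and cG: "continuous_on Dom (\<lambda>(x, y). G x y)" for F G :: "real \<Rightarrow> real \<Rightarrow> real"
  proof -
    have "continuous_on Dom (\<lambda>p. integral {0..fst p} (\<lambda>y. F (fst p) y * G y (snd p)))"
    proof (rule param_integral_continuous[where lo="\<lambda>p. 0" and hi=fst and \<phi>="\<lambda>p y. F (fst p) y * G y (snd p)"])
      show "continuous_on {(p, z). p \<in> Dom \<and> 0 \<le> z \<and> z \<le> fst p} (\<lambda>(p, z). F (fst p) z * G z (snd p))"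
        unfolding case_prod_beta'
        by (intro continuous_intros cont_comp2[OF cF] cont_comp2[OF cG]) (auto simp: Tri_def Dom_def)
    qed (auto simp: Dom_def intro!: continuous_intros)
    then show ?thesis by (simp add: case_prod_beta')
  qed
  have cW: "continuous_on Dom (\<lambda>(x, t). W x t)"
    unfolding W_def case_prod_beta' using jointI[OF cl cuh] cuh
    by (intro continuous_intros) (auto simp: case_prod_beta')
  have cWx: "continuous_on Dom (\<lambda>(x, t). Wx x t)"
  proof -
    have "continuous_on Dom (\<lambda>p. l (fst p) (fst p))"
      by (intro cont_comp2[OF cl] continuous_intros) (auto simp: Dom_def Tri_def)
    then show ?thesis
      unfolding Wx_def case_prod_beta' using jointI[OF cl1 cuh] cuh cuhx
      by (intro continuous_intros) (auto simp: case_prod_beta')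
  qed
  have cWt: "continuous_on Dom (\<lambda>(x, t). Wt x t)"
    unfolding Wt_def case_prod_beta' using jointI[OF cl cuht] cuht
    by (intro continuous_intros) (auto simp: case_prod_beta')
  have cR: "continuous_on Dom (\<lambda>(x, t). R x t)"
    unfolding R_def case_prod_beta' using cWt cWx
    by (intro continuous_intros) (auto simp: case_prod_beta')
  have lineI: "continuous_on {0..x} (\<lambda>y. F x y * G y t)"
    if cF: "continuous_on Tri (\<lambda>(x, y). F x y)" and cG: "continuous_on Dom (\<lambda>(x, y). G x y)"
      and "0 \<le> x" "x \<le> 1" "0 \<le> t" for F G :: "real \<Rightarrow> real \<Rightarrow> real" and x t :: real
    by (intro continuous_intros cont_comp2[OF cF] cont_comp2[OF cG]) (use that in \<open>auto simp: Tri_def Dom_def\<close>)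
  have lineD: "continuous_on {0..1} (\<lambda>y. G y t)" if cG: "continuous_on Dom (\<lambda>(x, y). G x y)" and "0 \<le> t" for G :: "real \<Rightarrow> real \<Rightarrow> real" and t :: real
    by (intro continuous_intros cont_comp2[OF cG]) (use that in \<open>auto simp: Dom_def\<close>)

  have dWx: "((\<lambda>x. W x t) has_real_derivative Wx x t) (at x within {0..1})"
    if x: "0 \<le> x" "x \<le> 1" and t: "0 \<le> t" for x t
  proof -
    have d1: "((\<lambda>x. uh x t) has_real_derivative uhx x t) (at x within {0..1})"
      by (rule C1_d1[OF uh_C1]) (use x t in \<open>auto simp: Dom_def\<close>)
    have d2: "((\<lambda>a. integral {0..a} (\<lambda>y. l a y * uh y t)) has_real_derivative
               (l x x * uh x t + integral {0..x} (\<lambda>y. l1 x y * uh y t))) (at x within {0..1})"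
    proof (rule var_leibniz[where H="\<lambda>a y. l a y * uh y t" and Ha="\<lambda>a y. l1 a y * uh y t", simplified])
      show "continuous_on {(a, z). 0 \<le> z \<and> z \<le> a \<and> a \<le> 1} (\<lambda>(a, z). l a z * uh z t)"
        unfolding case_prod_beta'
        by (intro continuous_intros cont_comp2[OF cl] cont_comp2[OF cuh]) (use t in \<open>auto simp: Tri_def Dom_def\<close>)
      show "continuous_on {(a, z). 0 \<le> z \<and> z \<le> a \<and> a \<le> 1} (\<lambda>(a, z). l1 a z * uh z t)"
        unfolding case_prod_beta'
        by (intro continuous_intros cont_comp2[OF cl1] cont_comp2[OF cuh]) (use t in \<open>auto simp: Tri_def Dom_def\<close>)
      show "((\<lambda>a. l a z * uh z t) has_real_derivative l1 a z * uh z t) (at a within {z..1})"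
        if "0 \<le> z" "z \<le> a" "a \<le> 1" for a z
        by (intro DERIV_cmult_right C1_d1[OF lC]) (use that in \<open>auto simp: Tri_def\<close>)
    qed (use x in auto)
    show ?thesis unfolding W_def Wx_def using DERIV_add[OF d1 d2] by (simp add: algebra_simps)
  qed

  have dWt: "((\<lambda>t. W x t) has_real_derivative Wt x t) (at t within {0..})"
    if x: "0 \<le> x" "x \<le> 1" and t: "0 \<le> t" for x t
  proof -
    have d1: "((\<lambda>t. uh x t) has_real_derivative uht x t) (at t within {0..})"
      by (rule C1_d2[OF uh_C1]) (use x t in \<open>auto simp: Dom_def\<close>)
    have d2: "((\<lambda>t. integral (cbox 0 x) (\<lambda>y. l x y * uh y t)) has_real_derivative
               integral (cbox 0 x) (\<lambda>y. l x y * uht y t)) (at t within {0..})"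
    proof (rule leibniz_rule_field_derivative[where fx="\<lambda>t y. l x y * uht y t"])
      show "((\<lambda>t. l x y * uh y t) has_real_derivative l x y * uht y s) (at s within {0..})"
        if "s \<in> {0..}" "y \<in> cbox 0 x" for s y
        by (intro DERIV_cmult C1_d2[OF uh_C1]) (use that x in \<open>auto simp: Dom_def\<close>)
      show "(\<lambda>y. l x y * uh y s) integrable_on cbox 0 x" if "s \<in> {0..}" for s
        using lineI[OF cl cuh x, of s] that by (auto intro: integrable_continuous_real)
      show "continuous_on ({0..} \<times> cbox 0 x) (\<lambda>(t, y). l x y * uht y t)"
        unfolding case_prod_beta'
        by (intro continuous_intros cont_comp2[OF cl] cont_comp2[OF cuht]) (use x in \<open>auto simp: Tri_def Dom_def\<close>)
    qed (use t in auto)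
    show ?thesis unfolding W_def Wt_def using DERIV_add[OF d1 d2] by simp
  qed

  have cWline: "continuous_on {0..1} (\<lambda>y. W y t)" if "0 \<le> t" for t using lineD[OF cW that] .

  have dVx: "((\<lambda>x. V x t) has_real_derivative (k x x * W x t + integral {0..x} (\<lambda>y. kx x y * W y t)))
              (at x within {0..1})"
    if x: "0 \<le> x" "x \<le> 1" and t: "0 \<le> t" for x t
    unfolding V_def
  proof (rule var_leibniz[where H="\<lambda>a y. k a y * W y t" and Ha="\<lambda>a y. kx a y * W y t", simplified])
    show "continuous_on {(a, z). 0 \<le> z \<and> z \<le> a \<and> a \<le> 1} (\<lambda>(a, z). k a z * W z t)"
      unfolding case_prod_beta'
      by (intro continuous_intros cont_comp2[OF ck] cont_comp2[OF cW]) (use t in \<open>auto simp: Tri_def Dom_def\<close>)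
    show "continuous_on {(a, z). 0 \<le> z \<and> z \<le> a \<and> a \<le> 1} (\<lambda>(a, z). kx a z * W z t)"
      unfolding case_prod_beta'
      by (intro continuous_intros cont_comp2[OF ckx] cont_comp2[OF cW]) (use t in \<open>auto simp: Tri_def Dom_def\<close>)
    show "((\<lambda>a. k a z * W z t) has_real_derivative kx a z * W z t) (at a within {z..1})"
      if "0 \<le> z" "z \<le> a" "a \<le> 1" for a z
      by (intro DERIV_cmult_right C1_d1[OF k_C1]) (use that in \<open>auto simp: Tri_def\<close>)
  qed (use x in auto)

  have dVt: "((\<lambda>t. V x t) has_real_derivative integral {0..x} (\<lambda>y. k x y * Wt y t)) (at t within {0..})"
    if x: "0 \<le> x" "x \<le> 1" and t: "0 \<le> t" for x t
  proof -
    have "((\<lambda>t. integral (cbox 0 x) (\<lambda>y. k x y * W y t)) has_real_derivative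
               integral (cbox 0 x) (\<lambda>y. k x y * Wt y t)) (at t within {0..})"
    proof (rule leibniz_rule_field_derivative[where fx="\<lambda>t y. k x y * Wt y t"])
      show "((\<lambda>t. k x y * W y t) has_real_derivative k x y * Wt y s) (at s within {0..})"
        if "s \<in> {0..}" "y \<in> cbox 0 x" for s y
        by (intro DERIV_cmult dWt) (use that x in auto)
      show "(\<lambda>y. k x y * W y s) integrable_on cbox 0 x" if "s \<in> {0..}" for s
        using lineI[OF ck cW x, of s] that by (auto intro: integrable_continuous_real)
      show "continuous_on ({0..} \<times> cbox 0 x) (\<lambda>(t, y). k x y * Wt y t)"
        unfolding case_prod_beta'
        by (intro continuous_intros cont_comp2[OF ck] cont_comp2[OF cWt]) (use x in \<open>auto simp: Tri_def Dom_def\<close>)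
    qed (use t in auto)
    then show ?thesis unfolding V_def by simp
  qed

  have uhWV: "uh x t = W x t - V x t" if x: "0 \<le> x" "x \<le> 1" and t: "0 \<le> t" for x t
  proof -
    have "continuous_on {0..1} (\<lambda>y. uh y t)" using lineD[OF cuh t] .
    then have "(uh x t + integral {0..x} (\<lambda>y. l x y * uh y t))
             - integral {0..x} (\<lambda>y. k x y * (uh y t + integral {0..y} (\<lambda>z. l y z * uh z t))) = uh x t"
      using l_inv2 x by auto
    then show ?thesis by (simp add: W_def V_def)
  qed

  have eqA: "uhx x t = Wx x t - (k x x * W x t + integral {0..x} (\<lambda>y. kx x y * W y t))"
    if x: "0 \<le> x" "x \<le> 1" and t: "0 \<le> t" for x t
  proof (rule deriv_unique_Icc[of 0 1 x "\<lambda>x. uh x t"])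
    show "((\<lambda>x. uh x t) has_real_derivative uhx x t) (at x within {0..1})"
      by (rule C1_d1[OF uh_C1]) (use x t in \<open>auto simp: Dom_def\<close>)
    have "((\<lambda>x. W x t - V x t) has_real_derivative Wx x t - (k x x * W x t + integral {0..x} (\<lambda>y. kx x y * W y t)))
            (at x within {0..1})"
      by (intro DERIV_diff dWx dVx x t)
    then show "((\<lambda>x. uh x t) has_real_derivative Wx x t - (k x x * W x t + integral {0..x} (\<lambda>y. kx x y * W y t)))
            (at x within {0..1})"
      by (rule has_field_derivative_transform_within[where d=1]) (use x t uhWV in auto)
  qed (use x in auto)

  have eqB: "uht x t = Wt x t - integral {0..x} (\<lambda>y. k x y * Wt y t)"
    if x: "0 \<le> x" "x \<le> 1" and t: "0 \<le> t" for x t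
  proof (rule deriv_unique_Icc[of t "t + 1" t "\<lambda>t. uh x t"])
    show "((\<lambda>t. uh x t) has_real_derivative uht x t) (at t within {t..t+1})"
      by (rule C1_d2[OF uh_C1]) (use x t in \<open>auto simp: Dom_def\<close>)
    have "((\<lambda>t. W x t - V x t) has_real_derivative Wt x t - integral {0..x} (\<lambda>y. k x y * Wt y t))
            (at t within {0..})"
      by (intro DERIV_diff dWt dVt x t)
    then have "((\<lambda>t. W x t - V x t) has_real_derivative Wt x t - integral {0..x} (\<lambda>y. k x y * Wt y t))
            (at t within {t..t+1})"
      by (rule DERIV_subset) (use t in auto)
    then show "((\<lambda>t. uh x t) has_real_derivative Wt x t - integral {0..x} (\<lambda>y. k x y * Wt y t))
            (at t within {t..t+1})"
      by (rule has_field_derivative_transform_within[where d=1]) (use x t uhWV in auto)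
  qed (use t in auto)

  have byparts: "integral {0..x} (\<lambda>y. ky x y * W y t + k x y * Wx y t) = k x x * W x t - k x 0 * W 0 t"
    if x: "0 \<le> x" "x \<le> 1" and t: "0 \<le> t" for x t
  proof (rule ftc_real[where f="\<lambda>y. k x y * W y t"])
    show "((\<lambda>y. k x y * W y t) has_real_derivative ky x y * W y t + k x y * Wx y t) (at y within {0..x})"
      if "y \<in> {0..x}" for y
    proof -
      have a: "((\<lambda>y. k x y) has_real_derivative ky x y) (at y within {0..x})"
        by (rule C1_d2[OF k_C1]) (use that x in \<open>auto simp: Tri_def\<close>)
      have b: "((\<lambda>y. W y t) has_real_derivative Wx y t) (at y within {0..x})"
        by (rule DERIV_subset[OF dWx]) (use that x t in auto)
      show ?thesis using DERIV_mult'[OF a b] by (simp add: add.commute)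
    qed
  qed (use x in auto)

  have fub: "integral {0..x} (\<lambda>y. W y t * integral {y..x} (\<lambda>\<eta>. f x \<eta> * k \<eta> y))
           = integral {0..x} (\<lambda>y. f x y * integral {0..y} (\<lambda>z. k y z * W z t))"
    if x: "0 \<le> x" "x \<le> 1" and t: "0 \<le> t" for x t
  proof -
    have c: "continuous_on {(a, y). 0 \<le> y \<and> y \<le> a \<and> a \<le> x} (\<lambda>(a, y). f x a * k a y * W y t)"
      unfolding case_prod_beta'
      by (intro continuous_intros cont_comp2[OF cf] cont_comp2[OF ck] cont_comp2[OF cW])
         (use x t in \<open>auto simp: Tri_def Dom_def\<close>)
    have "integral {0..x} (\<lambda>y. integral {y..x} (\<lambda>\<eta>. f x \<eta> * k \<eta> y * W y t))
        = integral {0..x} (\<lambda>\<eta>. integral {0..\<eta>} (\<lambda>y. f x \<eta> * k \<eta> y * W y t))"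
      by (rule tri_fubini[OF c x(1)])
    moreover have "integral {0..\<eta>} (\<lambda>y. f x \<eta> * k \<eta> y * W y t) = f x \<eta> * integral {0..\<eta>} (\<lambda>z. k \<eta> z * W z t)" for \<eta>
      by (simp add: mult.assoc)
    ultimately have "integral {0..x} (\<lambda>y. integral {y..x} (\<lambda>\<eta>. f x \<eta> * k \<eta> y) * W y t)
        = integral {0..x} (\<lambda>y. f x y * integral {0..y} (\<lambda>z. k y z * W z t))" by simp
    moreover have "(\<lambda>y. W y t * integral {y..x} (\<lambda>\<eta>. f x \<eta> * k \<eta> y)) = (\<lambda>y. integral {y..x} (\<lambda>\<eta>. f x \<eta> * k \<eta> y) * W y t)"
      by (simp add: fun_eq_iff mult.commute)
    ultimately show ?thesis by simp
  qed

  have key: "R x t - integral {0..x} (\<lambda>y. k x y * R y t) = (g x - k x 0) * u 0 t"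
    if x: "0 \<le> x" "x \<le> 1" and t: "0 \<le> t" for x t
  proof -
    have int: "F integrable_on {0..x}" if "continuous_on {0..x} F" for F :: "real \<Rightarrow> real"
      using that by (rule integrable_continuous_real)
    have ikWt: "(\<lambda>y. k x y * Wt y t) integrable_on {0..x}" by (intro int lineI[OF ck cWt] x t)
    have ikWx: "(\<lambda>y. k x y * Wx y t) integrable_on {0..x}" by (intro int lineI[OF ck cWx] x t)
    have ikyW: "(\<lambda>y. ky x y * W y t) integrable_on {0..x}" by (intro int lineI[OF cky cW] x t)
    have ikxW: "(\<lambda>y. kx x y * W y t) integrable_on {0..x}" by (intro int lineI[OF ckx cW] x t)
    have ifW: "(\<lambda>y. f x y * W y t) integrable_on {0..x}" by (intro int lineI[OF cf cW] x t)
    have ifV: "(\<lambda>y. f x y * V y t) integrable_on {0..x}"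
    proof (rule int)
      have "continuous_on {0..x} (\<lambda>y. f x y * (W y t - uh y t))"
        by (intro continuous_intros cont_comp2[OF cf] cont_comp2[OF cW] cont_comp2[OF cuh])
           (use x t in \<open>auto simp: Tri_def Dom_def\<close>)
      then show "continuous_on {0..x} (\<lambda>y. f x y * V y t)"
        by (rule continuous_on_eq) (use x t uhWV in auto)
    qed
    define \<Phi> where "\<Phi> y = integral {y..x} (\<lambda>\<eta>. f x \<eta> * k \<eta> y)" for y
    have pde: "ky x y + kx x y = f x y - \<Phi> y" if "y \<in> {0..x}" for y
      using k_pde that x by (auto simp: Tri_def \<Phi>_def)
    have pw: "f x y * W y t - (kx x y * W y t + ky x y * W y t) = W y t * \<Phi> y" if "y \<in> {0..x}" for y
    proof -
      have "f x y = ky x y + kx x y + \<Phi> y" using pde[OF that] by simp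
      then show ?thesis by (simp add: algebra_simps)
    qed
    have iWPhi: "(\<lambda>y. W y t * \<Phi> y) integrable_on {0..x}"
    proof -
      have "(\<lambda>y. f x y * W y t - (kx x y * W y t + ky x y * W y t)) integrable_on {0..x}"
        by (intro integrable_diff integrable_add ifW ikxW ikyW)
      then show ?thesis
        by (rule iffD1[OF integrable_cong, rotated]) (use pw in auto)
    qed
    have a1: "integral {0..x} (\<lambda>y. k x y * R y t) = integral {0..x} (\<lambda>y. k x y * Wt y t) - integral {0..x} (\<lambda>y. k x y * Wx y t)"
    proof -
      have "integral {0..x} (\<lambda>y. k x y * R y t) = integral {0..x} (\<lambda>y. k x y * Wt y t - k x y * Wx y t)"
        by (simp add: R_def algebra_simps)
      also have "\<dots> = integral {0..x} (\<lambda>y. k x y * Wt y t) - integral {0..x} (\<lambda>y. k x y * Wx y t)"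
        by (rule integral_diff[OF ikWt ikWx])
      finally show ?thesis .
    qed
    have a2: "uhx x t = Wx x t - (k x x * W x t + integral {0..x} (\<lambda>y. kx x y * W y t))" by (rule eqA[OF x t])
    have a3: "uht x t = Wt x t - integral {0..x} (\<lambda>y. k x y * Wt y t)" by (rule eqB[OF x t])
    have a4: "integral {0..x} (\<lambda>y. ky x y * W y t) + integral {0..x} (\<lambda>y. k x y * Wx y t) = k x x * W x t - k x 0 * W 0 t"
      using byparts[OF x t] integral_add[OF ikyW ikWx] by simp
    have a5: "integral {0..x} (\<lambda>y. kx x y * W y t) + integral {0..x} (\<lambda>y. ky x y * W y t)
        = integral {0..x} (\<lambda>y. f x y * W y t) - integral {0..x} (\<lambda>y. W y t * \<Phi> y)"
    proof -
      have "integral {0..x} (\<lambda>y. kx x y * W y t) + integral {0..x} (\<lambda>y. ky x y * W y t)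
          = integral {0..x} (\<lambda>y. kx x y * W y t + ky x y * W y t)"
        by (rule integral_add[OF ikxW ikyW, symmetric])
      also have "\<dots> = integral {0..x} (\<lambda>y. f x y * W y t - W y t * \<Phi> y)"
        by (rule integral_cong) (use pw in \<open>fastforce simp: algebra_simps\<close>)
      also have "\<dots> = integral {0..x} (\<lambda>y. f x y * W y t) - integral {0..x} (\<lambda>y. W y t * \<Phi> y)"
        by (rule integral_diff[OF ifW iWPhi])
      finally show ?thesis .
    qed
    have a6: "integral {0..x} (\<lambda>y. f x y * uh y t) = integral {0..x} (\<lambda>y. f x y * W y t) - integral {0..x} (\<lambda>y. f x y * V y t)"
    proof -
      have "integral {0..x} (\<lambda>y. f x y * uh y t) = integral {0..x} (\<lambda>y. f x y * W y t - f x y * V y t)"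
      proof (rule integral_cong)
        fix y assume "y \<in> {0..x}"
        then have "uh y t = W y t - V y t" using uhWV x t by auto
        then show "f x y * uh y t = f x y * W y t - f x y * V y t" by (simp add: right_diff_distrib)
      qed
      also have "\<dots> = integral {0..x} (\<lambda>y. f x y * W y t) - integral {0..x} (\<lambda>y. f x y * V y t)"
        by (rule integral_diff[OF ifW ifV])
      finally show ?thesis .
    qed
    have a7: "integral {0..x} (\<lambda>y. W y t * \<Phi> y) = integral {0..x} (\<lambda>y. f x y * V y t)"
      using fub[OF x t] by (simp add: \<Phi>_def V_def)
    have a8: "uht x t = uhx x t + g x * uh 0 t + integral {0..x} (\<lambda>y. f x y * uh y t) + (g x - k x 0) * (u 0 t - uh 0 t)"
      using uh_pde x t by auto
    have a9: "uh 0 t = W 0 t" by (simp add: W_def)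
    show ?thesis
      using a1 a2 a3 a4 a5 a6 a7 a8 a9 unfolding R_def by (simp add: algebra_simps)
  qed

  define p1 where "p1 x = g x - k x 0" for x
  define \<theta> where "\<theta> x = p1 x + integral {0..x} (\<lambda>y. l x y * p1 y)" for x
  have Rth: "R x t = \<theta> x * u 0 t" if x: "0 \<le> x" "x \<le> 1" and t: "0 \<le> t" for x t
  proof -
    have "continuous_on {0..1} (\<lambda>y. R y t)" using lineD[OF cR t] .
    then have "(R x t - integral {0..x} (\<lambda>y. k x y * R y t))
        + integral {0..x} (\<lambda>y. l x y * (R y t - integral {0..y} (\<lambda>z. k y z * R z t))) = R x t"
      using l_inv1 x by auto
    moreover have "integral {0..x} (\<lambda>y. l x y * (R y t - integral {0..y} (\<lambda>z. k y z * R z t)))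
        = integral {0..x} (\<lambda>y. l x y * p1 y * u 0 t)"
    proof (rule integral_cong)
      fix y assume "y \<in> {0..x}"
      then have "R y t - integral {0..y} (\<lambda>z. k y z * R z t) = p1 y * u 0 t"
        using key[of y t] x t by (auto simp: p1_def)
      then show "l x y * (R y t - integral {0..y} (\<lambda>z. k y z * R z t)) = l x y * p1 y * u 0 t"
        by simp
    qed
    moreover have "integral {0..x} (\<lambda>y. l x y * p1 y * u 0 t) = integral {0..x} (\<lambda>y. l x y * p1 y) * u 0 t"
      by (rule integral_mult_left)
    moreover have "R x t - integral {0..x} (\<lambda>y. k x y * R y t) = p1 x * u 0 t"
      using key[OF x t] by (simp add: p1_def)
    moreover have "\<theta> x * u 0 t = p1 x * u 0 t + integral {0..x} (\<lambda>y. l x y * p1 y) * u 0 t"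
      by (simp add: \<theta>_def distrib_right)
    ultimately show ?thesis by linarith
  qed

  have W1: "W 1 s = U s" if "0 \<le> s" for s
  proof -
    have "V 1 s = 0" unfolding V_def by (subst integral_cong[where g="\<lambda>y. 0"]) (use k_bc in auto)
    then show ?thesis using uhWV[of 1 s] u_bc uh_bc that by auto
  qed

  have Wwh: "W x t = integral {t + x - 1..t} (\<lambda>\<tau>. \<theta> (t + x - \<tau>) * u 0 \<tau>) + U (t + x - 1)"
    if x: "0 \<le> x" "x \<le> 1" and t: "1 \<le> t" for x t
  proof -
    define c where "c = t + x"
    have c1: "1 \<le> c" using x t by (simp add: c_def)
    define G where "G a = integral {0..a} (\<lambda>z. l a z * uh z (c - a))" for a
    have dG: "(G has_real_derivative (l a a * uh a (c - a) + integral {0..a} (\<lambda>z. l1 a z * uh z (c - a) - l a z * uht z (c - a))))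
        (at a within {0..1})" if a: "0 \<le> a" "a \<le> 1" for a
      unfolding G_def
    proof (rule var_leibniz[where H="\<lambda>a z. l a z * uh z (c - a)" and Ha="\<lambda>a z. l1 a z * uh z (c - a) - l a z * uht z (c - a)", simplified])
      show "continuous_on {(a, z). 0 \<le> z \<and> z \<le> a \<and> a \<le> 1} (\<lambda>(a, z). l a z * uh z (c - a))"
        unfolding case_prod_beta'
        by (intro continuous_intros cont_comp2[OF cl] cont_comp2[OF cuh]) (use c1 in \<open>auto simp: Tri_def Dom_def\<close>)
      show "continuous_on {(a, z). 0 \<le> z \<and> z \<le> a \<and> a \<le> 1} (\<lambda>(a, z). l1 a z * uh z (c - a) - l a z * uht z (c - a))"
        unfolding case_prod_beta'
        by (intro continuous_intros cont_comp2[OF cl] cont_comp2[OF cuh] cont_comp2[OF cl1] cont_comp2[OF cuht])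
           (use c1 in \<open>auto simp: Tri_def Dom_def\<close>)
      show "((\<lambda>a. l a z * uh z (c - a)) has_real_derivative l1 a z * uh z (c - a) - l a z * uht z (c - a)) (at a within {z..1})"
        if "0 \<le> z" "z \<le> a" "a \<le> 1" for a z
      proof -
        have d1: "((\<lambda>a. l a z) has_real_derivative l1 a z) (at a within {z..1})"
          by (rule C1_d1[OF lC]) (use that in \<open>auto simp: Tri_def\<close>)
        have "((\<lambda>s. uh (z + 0 * s) (c + (-1) * s)) has_real_derivative
                (0 * uhx (z + 0 * a) (c + (-1) * a) + (-1) * uht (z + 0 * a) (c + (-1) * a))) (at a within {z..1})"
          by (rule C1_line_deriv[OF uh_C1]) (use that c1 in \<open>auto simp: Dom_def\<close>)
        then have d2: "((\<lambda>a. uh z (c - a)) has_real_derivative - uht z (c - a)) (at a within {z..1})"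
          by simp
        show ?thesis using DERIV_mult[OF d1 d2] by (simp add: algebra_simps)
      qed
    qed (use a in auto)
    define \<omega> where "\<omega> \<tau> = W (c - \<tau>) \<tau>" for \<tau>
    have d\<omega>: "(\<omega> has_real_derivative R (c - \<tau>) \<tau>) (at \<tau> within {t + x - 1..t})"
      if \<tau>: "\<tau> \<in> {t + x - 1..t}" for \<tau>
    proof -
      have a: "0 \<le> c - \<tau>" "c - \<tau> \<le> 1" "0 \<le> \<tau>" using \<tau> x t by (auto simp: c_def)
      have "((\<lambda>s. uh (c + (-1) * s) (0 + 1 * s)) has_real_derivative
              ((-1) * uhx (c + (-1) * \<tau>) (0 + 1 * \<tau>) + 1 * uht (c + (-1) * \<tau>) (0 + 1 * \<tau>))) (at \<tau> within {t + x - 1..t})"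
        by (rule C1_line_deriv[OF uh_C1]) (use x t \<tau> in \<open>auto simp: Dom_def c_def\<close>)
      then have d1: "((\<lambda>s. uh (c - s) s) has_real_derivative (uht (c - \<tau>) \<tau> - uhx (c - \<tau>) \<tau>)) (at \<tau> within {t + x - 1..t})"
        by simp
      have "((G \<circ> (\<lambda>s. c - s)) has_real_derivative
          (l (c - \<tau>) (c - \<tau>) * uh (c - \<tau>) (c - (c - \<tau>)) + integral {0..c - \<tau>} (\<lambda>z. l1 (c - \<tau>) z * uh z (c - (c - \<tau>)) - l (c - \<tau>) z * uht z (c - (c - \<tau>)))) * (-1))
          (at \<tau> within {t + x - 1..t})"
      proof (rule DERIV_image_chain)
        show "(G has_real_derivative (l (c - \<tau>) (c - \<tau>) * uh (c - \<tau>) (c - (c - \<tau>)) + integral {0..c - \<tau>} (\<lambda>z. l1 (c - \<tau>) z * uh z (c - (c - \<tau>)) - l (c - \<tau>) z * uht z (c - (c - \<tau>)))))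
            (at (c - \<tau>) within (\<lambda>s. c - s) ` {t + x - 1..t})"
          by (rule DERIV_subset[OF dG[OF a(1,2)]]) (use x t in \<open>auto simp: c_def\<close>)
        show "((\<lambda>s. c - s) has_real_derivative -1) (at \<tau> within {t + x - 1..t})"
          by (auto intro!: derivative_eq_intros)
      qed
      then have d2: "((\<lambda>s. G (c - s)) has_real_derivative
          - (l (c - \<tau>) (c - \<tau>) * uh (c - \<tau>) \<tau> + integral {0..c - \<tau>} (\<lambda>z. l1 (c - \<tau>) z * uh z \<tau> - l (c - \<tau>) z * uht z \<tau>)))
          (at \<tau> within {t + x - 1..t})"
        by (simp add: o_def)
      have i1: "(\<lambda>z. l1 (c - \<tau>) z * uh z \<tau>) integrable_on {0..c - \<tau>}"
        by (intro integrable_continuous_real lineI[OF cl1 cuh] a)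
      have i2: "(\<lambda>z. l (c - \<tau>) z * uht z \<tau>) integrable_on {0..c - \<tau>}"
        by (intro integrable_continuous_real lineI[OF cl cuht] a)
      have "integral {0..c - \<tau>} (\<lambda>z. l1 (c - \<tau>) z * uh z \<tau> - l (c - \<tau>) z * uht z \<tau>)
          = integral {0..c - \<tau>} (\<lambda>z. l1 (c - \<tau>) z * uh z \<tau>) - integral {0..c - \<tau>} (\<lambda>z. l (c - \<tau>) z * uht z \<tau>)"
        by (rule integral_diff[OF i1 i2])
      then have "(uht (c - \<tau>) \<tau> - uhx (c - \<tau>) \<tau>) +
          - (l (c - \<tau>) (c - \<tau>) * uh (c - \<tau>) \<tau> + integral {0..c - \<tau>} (\<lambda>z. l1 (c - \<tau>) z * uh z \<tau> - l (c - \<tau>) z * uht z \<tau>))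
          = R (c - \<tau>) \<tau>"
        by (simp add: R_def Wt_def Wx_def)
      moreover have "\<omega> = (\<lambda>s. uh (c - s) s + G (c - s))"
        by (simp add: fun_eq_iff \<omega>_def W_def G_def)
      ultimately show ?thesis using DERIV_add[OF d1 d2] by simp
    qed
    have "integral {t + x - 1..t} (\<lambda>\<tau>. R (c - \<tau>) \<tau>) = \<omega> t - \<omega> (t + x - 1)"
      by (rule ftc_real) (use x d\<omega> in auto)
    moreover have "integral {t + x - 1..t} (\<lambda>\<tau>. R (c - \<tau>) \<tau>) = integral {t + x - 1..t} (\<lambda>\<tau>. \<theta> (t + x - \<tau>) * u 0 \<tau>)"
      by (rule integral_cong) (use x t Rth in \<open>auto simp: c_def\<close>)
    moreover have "\<omega> t = W x t" by (simp add: \<omega>_def c_def)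
    moreover have "\<omega> (t + x - 1) = U (t + x - 1)" using W1[of "t + x - 1"] x t by (simp add: \<omega>_def c_def)
    ultimately show ?thesis by simp
  qed

  show ?thesis
    unfolding Let_def
  proof (intro allI impI ballI)
    fix t x :: real assume t: "1 \<le> t" and x: "x \<in> {0..1}"
    define wh where "wh x t = integral {t + x - 1..t} (\<lambda>\<tau>. \<theta> (t + x - \<tau>) * u 0 \<tau>) + U (t + x - 1)" for x t
    have "uh x t = W x t - V x t" using uhWV x t by auto
    also have "\<dots> = wh x t - integral {0..x} (\<lambda>y. k x y * wh y t)"
      unfolding V_def
      using Wwh x t by (auto simp: wh_def intro!: integral_cong)
    finally show "uh x t = integral {t + x - 1..t} (\<lambda>\<tau>. (g (t + x - \<tau>) - k (t + x - \<tau>) 0 + integral {0..t + x - \<tau>} (\<lambda>y. l (t + x - \<tau>) y * (g y - k y 0))) * u 0 \<tau>) + U (t + x - 1) -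
         integral {0..x} (\<lambda>y. k x y * (integral {t + y - 1..t} (\<lambda>\<tau>. (g (t + y - \<tau>) - k (t + y - \<tau>) 0 + integral {0..t + y - \<tau>} (\<lambda>ya. l (t + y - \<tau>) ya * (g ya - k ya 0))) * u 0 \<tau>) + U (t + y - 1)))"
      by (simp add: wh_def \<theta>_def p1_def)
  qed
qed

end
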